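(* Let $\mathcal A(v)=\int_1^\infty\frac{L(u)\,\ell(u,v)}{u^2-v^2}\,du$ for $0<v<1$. Let $\delta>0$ with $2\delta<1$, and let $\chi_0\in C_c^\infty([0,1))$ satisfy $\chi_0(v)=1$ for $0\le v\le\delta$ and $\chi_0(v)=0$ for $v\ge2\delta$. Then $$\mathcal A(v)=2\log2\,\chi_0(v)\log\frac1v+g(v)\qquad\text{with } g\in W^{1,1}(0,1).$$
   Context: For $u>1$ let $L(u)=\log\frac{u+1}{u-1}$, and for $u\ge1$, $0<v\le1$ let $\ell(u,v)=\log\frac{1}{uv}$. $W^{1,1}(0,1)$ is the Sobolev space of integrable functions with integrable weak derivative. *)

theory Defs
  imports "HOL-Analysis.Analysis"
begin

definition L :: "real \<Rightarrow> real" where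
  "L u = ln ((u + 1) / (u - 1))"

definition ell :: "real \<Rightarrow> real \<Rightarrow> real" where
  "ell u v = ln (1 / (u * v))"

definition calA :: "real \<Rightarrow> real" where
  "calA v = (LINT u:{1<..}|lborel. L u * ell u v / (u\<^sup>2 - v\<^sup>2))"

definition smooth_on :: "real set \<Rightarrow> (real \<Rightarrow> real) \<Rightarrow> bool" where
  "smooth_on S f \<longleftrightarrow> (\<forall>n. \<forall>x\<in>S. ((deriv ^^ n) f) differentiable (at x))"

definition test_fun01 :: "(real \<Rightarrow> real) \<Rightarrow> bool" where
  "test_fun01 \<phi> \<longleftrightarrow> smooth_on UNIV \<phi> \<and>
     (\<exists>a b. 0 < a \<and> a \<le> b \<and> b < 1 \<and> (\<forall>x. x \<notin> {a..b} \<longrightarrow> \<phi> x = 0))"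

definition W11_01 :: "(real \<Rightarrow> real) \<Rightarrow> bool" where
  "W11_01 g \<longleftrightarrow> set_integrable lborel {0<..<1} g \<and>
     (\<exists>h. set_integrable lborel {0<..<1} h \<and>
        (\<forall>\<phi>. test_fun01 \<phi> \<longrightarrow>
           (LINT x:{0<..<1}|lborel. g x * deriv \<phi> x) = - (LINT x:{0<..<1}|lborel. h x * \<phi> x)))"

end

theory Submission
  imports Defs "HOL-Real_Asymp.Real_Asymp"
begin




lemma lim_atan: "((\<lambda>u::real. 2 * arctan (sqrt (u - 1))) \<longlongrightarrow> pi) at_top"
proof -
  have "filterlim (\<lambda>u::real. sqrt (u - 1)) at_top at_top" by real_asymp
  from filterlim_compose[OF tendsto_arctan_at_top this]
  have "((\<lambda>u::real. arctan (sqrt (u - 1))) \<longlongrightarrow> pi/2) at_top" .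
  from tendsto_mult[OF tendsto_const[of 2] this] show ?thesis by simp
qed

lemma D_int: "set_integrable lborel {1<..} (\<lambda>u::real. 1 / (u * sqrt (u - 1)))"
proof -
  have "set_integrable lborel (einterval 1 \<infinity>) (\<lambda>u::real. 1 / (u * sqrt (u - 1)))"
  proof (rule interval_integral_FTC_nonneg[where F="\<lambda>u. 2 * arctan (sqrt (u - 1))" and A=0 and B=pi])
    fix x :: real assume "1 < ereal x" "ereal x < \<infinity>"
    then have x: "1 < x" by simp
    show "((\<lambda>u. 2 * arctan (sqrt (u - 1))) has_real_derivative 1 / (x * sqrt (x - 1))) (at x)"
    proof -
      have s: "sqrt (x - 1) ^ 2 = x - 1" "sqrt (x - 1) > 0" using x by auto
      have "((\<lambda>u. 2 * arctan (sqrt (u - 1))) has_real_derivative 2 * (inverse (1 + (sqrt (x - 1))^2) * (inverse (sqrt (x - 1)) / 2 * 1))) (at x)"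
      proof -
        have d1: "((\<lambda>u. u - 1) has_real_derivative 1) (at x)" by (auto intro!: derivative_eq_intros)
        have d2: "((\<lambda>u. sqrt (u-1)) has_real_derivative (inverse (sqrt (x-1)) / 2 * 1)) (at x)"
          using DERIV_chain2[OF DERIV_real_sqrt d1] x by simp
        note d3 = DERIV_chain2[OF DERIV_arctan d2]
        show ?thesis using DERIV_cmult[OF d3, of 2] by simp
      qed
      moreover have "2 * (inverse (1 + (sqrt (x - 1))^2) * (inverse (sqrt (x - 1)) / 2 * 1)) = 1 / (x * sqrt (x - 1))"
        using s by (simp add: field_simps)
      ultimately show ?thesis by simp
    qed
    show "isCont (\<lambda>u. 1 / (u * sqrt (u - 1))) x" using x by (auto intro!: continuous_intros)
  next
    show "AE x in lborel. 1 < ereal x \<longrightarrow> ereal x < \<infinity> \<longrightarrow> 0 \<le> 1 / (x * sqrt (x - 1))" by auto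
    show "(((\<lambda>u. 2 * arctan (sqrt (u - 1))) \<circ> real_of_ereal) \<longlongrightarrow> 0) (at_right 1)"
      unfolding one_ereal_def ereal_tendsto_simps by (rule tendsto_eq_intros refl | simp)+
    show "(((\<lambda>u. 2 * arctan (sqrt (u - 1))) \<circ> real_of_ereal) \<longlongrightarrow> pi) (at_left \<infinity>)"
      using lim_atan unfolding ereal_tendsto_simps by simp
  qed simp
  then show ?thesis by (simp add: one_ereal_def)
qed

lemma L_int: "set_integrable lborel {1<..} (\<lambda>u::real. L u / u^2)"
  and L_int_val: "(LINT u:{1<..}|lborel. L u / u^2) = 2 * ln 2"
proof -
  define F where "F u = - (ln (u+1) - ln (u-1)) / u + 2 * ln u - ln (u - 1) - ln (u + 1)" for u :: real
  have Lx: "L x = ln (x+1) - ln (x-1)" if "1 < x" for x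
    using that by (simp add: L_def ln_div)
  have der: "(F has_real_derivative L x / x^2) (at x)" if x: "1 < x" for x
  proof -
    have r: "(1/(x-1) - 1/(x+1))/x + 2/x - 1/(x-1) - 1/(x+1) = 0"
    proof -
      have a: "x - 1 \<noteq> 0" "x + 1 \<noteq> 0" "x \<noteq> 0" using x by auto
      have b: "1/(x-1)/x = 1/(x-1) - 1/x" "1/(x+1)/x = 1/x - 1/(x+1)"
        using a by (simp_all add: field_simps)
      show ?thesis unfolding diff_divide_distrib b by simp
    qed
    show ?thesis
      unfolding F_def using x
      apply (intro derivative_eq_intros refl)
      apply (auto simp: Lx)
    proof -
      have e: "((1/(x-1) - 1/(x+1)) * x - (ln (x-1) - ln (x+1)))/(x*x) = (1/(x-1) - 1/(x+1))/x + (ln (x+1) - ln (x-1))/(x*x)"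
        using x by (simp add: diff_divide_distrib add_divide_distrib)
      show "((1 / (x - 1) - 1 / (x + 1)) * x - (ln (x - 1) - ln (x + 1))) / (x * x) + 2 / x - 1 / (x - 1) - 1 / (x + 1) = (ln (x + 1) - ln (x - 1)) / x\<^sup>2"
        unfolding e power2_eq_square using r by simp
    qed
  qed
  have A: "((F \<circ> real_of_ereal) \<longlongrightarrow> - 2 * ln 2) (at_right 1)"
    unfolding one_ereal_def ereal_tendsto_simps F_def by real_asymp
  have B: "((F \<circ> real_of_ereal) \<longlongrightarrow> 0) (at_left \<infinity>)"
    unfolding ereal_tendsto_simps F_def by real_asymp
  have cont: "isCont (\<lambda>u. L u / u^2) x" if "1 < x" for x
    using that unfolding L_def by (auto intro!: continuous_intros)
  have nn: "0 \<le> L x / x^2" if "1 < x" for x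
    using that unfolding L_def by (auto intro!: divide_nonneg_nonneg)
  have 1: "set_integrable lborel (einterval 1 \<infinity>) (\<lambda>u::real. L u / u^2)"
    by (rule interval_integral_FTC_nonneg[OF _ _ _ _ A B]) (auto simp: der cont nn)
  have 2: "(LBINT u=1..\<infinity>. L u / u^2) = 0 - (- 2 * ln 2)"
    by (rule interval_integral_FTC_nonneg[OF _ _ _ _ A B]) (auto simp: der cont nn)
  show "set_integrable lborel {1<..} (\<lambda>u::real. L u / u^2)" using 1 by (simp add: one_ereal_def)
  show "(LINT u:{1<..}|lborel. L u / u^2) = 2 * ln 2" using 2
    by (simp add: interval_lebesgue_integral_le_eq one_ereal_def)
qed


lemma ln_le_2sqrt: "0 < (y::real) \<Longrightarrow> ln y \<le> 2 * (sqrt y - 1)"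
proof -
  assume y: "0 < y"
  have "ln (sqrt y) \<le> sqrt y - 1" using y by (intro ln_le_minus_one) auto
  moreover have "ln y = 2 * ln (sqrt y)" using y by (simp add: ln_sqrt)
  ultimately show ?thesis by simp
qed

lemma W_bound:
  assumes u: "1 < (u::real)"
  shows "ln ((u+1)/(u-1)) * ln u / (u^2 - 1) \<le> 4 * (1 / (u * sqrt (u - 1)))"
proof -
  define a where "a = sqrt (u - 1)"
  define b where "b = sqrt (u + 1)"
  define c where "c = sqrt u"
  have a: "a > 0" "a^2 = u - 1" using u by (auto simp: a_def)
  have b: "b > 0" "b^2 = u + 1" using u by (auto simp: b_def)
  have c: "c > 1" "c^2 = u" using u by (auto simp: c_def)
  have cb: "c \<le> b" unfolding b_def c_def by simp
  have q: "sqrt ((u+1)/(u-1)) = b / a" by (simp add: a_def b_def real_sqrt_divide)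
  have L1: "ln ((u+1)/(u-1)) \<le> 2 * (b / a)"
    using ln_le_2sqrt[of "(u+1)/(u-1)"] u q a b by (auto simp: field_simps)
  have L0: "0 \<le> ln ((u+1)/(u-1))" using u by simp
  have l1: "ln u \<le> 2 * (c - 1)" using ln_le_2sqrt[of u] u by (simp add: c_def)
  have l0: "0 \<le> ln u" using u by simp
  have "ln ((u+1)/(u-1)) * ln u \<le> (2 * (b / a)) * (2 * (c - 1))"
    by (rule mult_mono[OF L1 l1]) (use a b c in auto)
  moreover have "u^2 - 1 > 0" using u by (simp add: less_1_mult power2_eq_square)
  ultimately have "ln ((u+1)/(u-1)) * ln u / (u^2 - 1) \<le> (2 * (b / a)) * (2 * (c - 1)) / (u^2 - 1)"
    by (intro divide_right_mono) auto
  also have "\<dots> \<le> 4 * (1 / (u * a))"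
  proof -
    have u2: "u^2 - 1 = a^2 * b^2"
    proof -
      have "u^2-1 = (u-1)*(u+1)" by (simp add: power2_eq_square algebra_simps)
      then show ?thesis using a(2) b(2) by simp
    qed
    have cm: "c - 1 = a^2 / (c + 1)" using c a by (simp add: field_simps power2_eq_square)
    have "(2 * (b / a)) * (2 * (c - 1)) / (u^2 - 1) = 4 / (a * b * (c + 1))"
      proof -
        have d: "a*b + a*(b*c) > 0" "a * (a * (b * b)) + a * (a * (b * (b * c))) > 0"
          using a(1) b(1) c(1) by (simp_all add: add_pos_pos)
        show ?thesis unfolding u2 cm using a(1) b(1) c(1) d by (simp add: field_simps power2_eq_square)
      qed
    also have "\<dots> \<le> 4 / (a * u)"
    proof -
      have "c * c \<le> b * c" using cb c by (intro mult_right_mono) auto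
      moreover have "b * c \<le> b * (c + 1)" using b by simp
      ultimately have "u \<le> b * (c + 1)" using c(2) by (simp add: power2_eq_square)
      then have "a * u \<le> a * b * (c + 1)" using a by (simp add: mult.assoc)
      moreover have "0 < a * b * (c + 1) * (a * u)" using a(1) b(1) c(1) u by simp
      ultimately show ?thesis using a(1) u by (intro divide_left_mono) auto
    qed
    finally show ?thesis by (simp add: mult.commute)
  qed
  finally show ?thesis by (simp add: a_def)
qed



lemma bounded_mult_integrable:
  fixes g p :: "real \<Rightarrow> real"
  assumes g: "set_integrable lborel A g" and A: "A \<in> sets lborel"
    and p: "continuous_on UNIV p" and B: "\<And>x. \<bar>p x\<bar> \<le> B"
  shows "set_integrable lborel A (\<lambda>x. g x * p x)"
proof (rule set_integrable_bound[where f="\<lambda>x. B * g x"])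
  show "set_integrable lborel A (\<lambda>x. B * g x)" using g by simp
  have gm: "set_borel_measurable lborel A g"
    using g unfolding set_integrable_def set_borel_measurable_def by auto
  have pm: "p \<in> borel_measurable lborel"
    using p by (simp add: borel_measurable_continuous_onI)
  show "set_borel_measurable lborel A (\<lambda>x. g x * p x)"
    using gm pm unfolding set_borel_measurable_def
    by (simp add: mult.assoc[symmetric] borel_measurable_times)
  show "AE x in lborel. x \<in> A \<longrightarrow> norm (g x * p x) \<le> norm (B * g x)"
  proof (rule AE_I2, intro impI)
    fix x
    have "\<bar>g x\<bar> * \<bar>p x\<bar> \<le> \<bar>g x\<bar> * B" using B[of x] by (intro mult_left_mono) auto
    moreover have "0 \<le> B" using B[of x] by linarith
    ultimately show "norm (g x * p x) \<le> norm (B * g x)" by (simp add: abs_mult mult.commute)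
  qed
qed

lemma W11_intro:
  fixes g h :: "real \<Rightarrow> real"
  assumes der: "\<And>x. 0 < x \<Longrightarrow> x < 1 \<Longrightarrow> (g has_real_derivative h x) (at x)"
    and gi: "set_integrable lborel {0<..<1} g"
    and hi: "set_integrable lborel {0<..<1} h"
  shows "W11_01 g"
  unfolding W11_01_def
proof (intro conjI exI[of _ h] allI impI gi hi)
  fix \<phi> assume tf: "test_fun01 \<phi>"
  then obtain a b where ab: "0 < a" "a \<le> b" "b < 1" and z: "\<And>x. x \<notin> {a..b} \<Longrightarrow> \<phi> x = 0"
    unfolding test_fun01_def by auto
  have sm: "\<And>n x. ((deriv ^^ n) \<phi>) differentiable (at x)"
    using tf unfolding test_fun01_def smooth_on_def by auto
  have d0: "\<phi> differentiable (at x)" for x using sm[of 0 x] by simp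
  have d1: "deriv \<phi> differentiable (at x)" for x using sm[of 1 x] by simp
  have dphi: "(\<phi> has_real_derivative deriv \<phi> x) (at x)" for x
    using d0 DERIV_deriv_iff_real_differentiable by blast
  have cphi: "continuous_on UNIV \<phi>"
    using d0 by (simp add: continuous_at_imp_continuous_on differentiable_imp_continuous_within)
  have cdphi: "continuous_on UNIV (deriv \<phi>)"
    using d1 by (simp add: continuous_at_imp_continuous_on differentiable_imp_continuous_within)
  have dz: "deriv \<phi> x = 0" if "x \<notin> {a..b}" for x
  proof -
    have "x < a \<or> b < x" using that by auto
    then obtain S where S: "open S" "x \<in> S" "S \<inter> {a..b} = {}"
      by (metis (no_types, lifting) disjoint_iff greaterThan_iff lessThan_iff atLeastAtMost_iff not_less
          open_greaterThan open_lessThan order.strict_trans2)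
    have "((\<lambda>_. 0::real) has_real_derivative 0) (at x)" by simp
    then have "(\<phi> has_real_derivative 0) (at x)"
    proof (rule has_field_derivative_transform_within_open[OF _ S(1,2)])
      fix y assume "y \<in> S"
      then have "y \<notin> {a..b}" using S(3) by blast
      then show "0 = \<phi> y" using z by simp
    qed
    then show ?thesis using dphi[of x] DERIV_unique by blast
  qed
  obtain B1 where B1: "\<And>x. \<bar>\<phi> x\<bar> \<le> B1"
  proof -
    have "compact (\<phi> ` {a..b})" by (intro compact_continuous_image continuous_on_subset[OF cphi]) auto
    then obtain B where "\<forall>y\<in>\<phi> ` {a..b}. norm y \<le> B" using compact_imp_bounded bounded_iff by metis
    then have "\<bar>\<phi> x\<bar> \<le> max B 0" for x using z[of x] by (cases "x \<in> {a..b}") (auto simp: le_max_iff_disj)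
    then show ?thesis using that by blast
  qed
  obtain B2 where B2: "\<And>x. \<bar>deriv \<phi> x\<bar> \<le> B2"
  proof -
    have "compact (deriv \<phi> ` {a..b})" by (intro compact_continuous_image continuous_on_subset[OF cdphi]) auto
    then obtain B where "\<forall>y\<in>deriv \<phi> ` {a..b}. norm y \<le> B" using compact_imp_bounded bounded_iff by metis
    then have "\<bar>deriv \<phi> x\<bar> \<le> max B 0" for x using dz[of x] by (cases "x \<in> {a..b}") (auto simp: le_max_iff_disj)
    then show ?thesis using that by blast
  qed
  define a' where "a' = a / 2"
  define b' where "b' = (b + 1) / 2"
  have a'b': "0 < a'" "a' < a" "b < b'" "b' < 1" "a' \<le> b'" using ab by (auto simp: a'_def b'_def)
  have sub: "{a'..b'} \<subseteq> {0<..<1}" using a'b' by auto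
  have i1: "set_integrable lborel {a'..b'} (\<lambda>x. g x * deriv \<phi> x)"
    by (rule bounded_mult_integrable[OF set_integrable_subset[OF gi _ sub] _ cdphi B2]) auto
  have i2: "set_integrable lborel {a'..b'} (\<lambda>x. h x * \<phi> x)"
    by (rule bounded_mult_integrable[OF set_integrable_subset[OF hi _ sub] _ cphi B1]) auto
  have ftc: "((\<lambda>x. h x * \<phi> x + g x * deriv \<phi> x) has_integral (g b' * \<phi> b' - g a' * \<phi> a')) {a'..b'}"
  proof (rule fundamental_theorem_of_calculus[where f="\<lambda>x. g x * \<phi> x", OF a'b'(5)])
    fix x assume "x \<in> {a'..b'}"
    then have x: "0 < x" "x < 1" using sub by auto
    have "((\<lambda>x. g x * \<phi> x) has_real_derivative (h x * \<phi> x + g x * deriv \<phi> x)) (at x)"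
      using DERIV_mult[OF der[OF x] dphi[of x]] by (simp add: algebra_simps)
    then show "((\<lambda>x. g x * \<phi> x) has_vector_derivative (h x * \<phi> x + g x * deriv \<phi> x)) (at x within {a'..b'})"
      by (simp add: has_real_derivative_iff_has_vector_derivative has_vector_derivative_at_within)
  qed
  have "\<phi> a' = 0" "\<phi> b' = 0" using z a'b' by auto
  then have ftc0: "((\<lambda>x. h x * \<phi> x + g x * deriv \<phi> x) has_integral 0) {a'..b'}" using ftc by simp
  have "(LINT x:{a'..b'}|lborel. h x * \<phi> x + g x * deriv \<phi> x) = 0"
    using set_borel_integral_eq_integral(2)[OF set_integral_add(1)[OF i2 i1]] ftc0
    by (simp add: integral_unique)
  then have e: "(LINT x:{a'..b'}|lborel. g x * deriv \<phi> x) = - (LINT x:{a'..b'}|lborel. h x * \<phi> x)"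
    using set_integral_add(2)[OF i2 i1] by simp
  have r1: "(LINT x:{0<..<1}|lborel. g x * deriv \<phi> x) = (LINT x:{a'..b'}|lborel. g x * deriv \<phi> x)"
    unfolding set_lebesgue_integral_def
    by (rule Bochner_Integration.integral_cong[OF refl])
       (use sub dz a'b' in \<open>auto simp: indicator_def\<close>)
  have r2: "(LINT x:{0<..<1}|lborel. h x * \<phi> x) = (LINT x:{a'..b'}|lborel. h x * \<phi> x)"
    unfolding set_lebesgue_integral_def
    by (rule Bochner_Integration.integral_cong[OF refl])
       (use sub z a'b' in \<open>auto simp: indicator_def\<close>)
  show "(LINT x:{0<..<1}|lborel. g x * deriv \<phi> x) = - (LINT x:{0<..<1}|lborel. h x * \<phi> x)"
    using e r1 r2 by simp
qed



lemma deriv_integrable_nonneg: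
  fixes f f' :: "real \<Rightarrow> real"
  assumes ab: "a < b"
    and der: "\<And>x. a < x \<Longrightarrow> x < b \<Longrightarrow> (f has_real_derivative f' x) (at x)"
    and cont: "\<And>x. a < x \<Longrightarrow> x < b \<Longrightarrow> isCont f' x"
    and nn: "\<And>x. a < x \<Longrightarrow> x < b \<Longrightarrow> 0 \<le> f' x"
    and bd: "\<And>x. a < x \<Longrightarrow> x < b \<Longrightarrow> \<bar>f x\<bar> \<le> B"
  shows "set_integrable lborel {a<..<b} f'"
proof -
  have mono: "f x \<le> f y" if "a < x" "x \<le> y" "y < b" for x y
  proof (rule DERIV_nonneg_imp_increasing_open[OF that(2)])
    fix t assume "x < t" "t < y"
    then show "\<exists>y. (f has_real_derivative y) (at t) \<and> 0 \<le> y" using der nn that by force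
  next
    show "continuous_on {x..y} f"
    proof (rule continuous_at_imp_continuous_on, intro ballI)
      fix t assume "t \<in> {x..y}"
      then have "a < t" "t < b" using that by auto
      then show "isCont f t" using der DERIV_isCont by blast
    qed
  qed
  let ?S = "f ` {a<..<b}"
  have ne: "?S \<noteq> {}" using ab by auto
  have bda: "bdd_above ?S" using bd by (auto intro!: bdd_aboveI[of _ B] simp: abs_le_iff)
  have bdb: "bdd_below ?S"
  proof (rule bdd_belowI[of _ "-B"])
    fix y assume "y \<in> ?S"
    then obtain x where "a < x" "x < b" "y = f x" by auto
    then show "-B \<le> y" using bd[of x] by linarith
  qed
  have limb: "(f \<longlongrightarrow> Sup ?S) (at_left b)"
  proof (rule order_tendstoI)
    fix l assume "l < Sup ?S"
    then obtain x0 where x0: "a < x0" "x0 < b" "l < f x0"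
      using less_cSup_iff[OF ne bda] by auto
    show "eventually (\<lambda>x. l < f x) (at_left b)"
    proof (rule eventually_mono[OF eventually_at_left_real[OF x0(2)]])
      fix x assume "x \<in> {x0<..<b}"
      then have "f x0 \<le> f x" using mono[of x0 x] x0 by auto
      then show "l < f x" using x0 by linarith
    qed
  next
    fix u assume u: "Sup ?S < u"
    show "eventually (\<lambda>x. f x < u) (at_left b)"
    proof (rule eventually_mono[OF eventually_at_left_real[OF ab]])
      fix x assume "x \<in> {a<..<b}"
      then have "f x \<le> Sup ?S" using cSup_upper[OF _ bda] by auto
      then show "f x < u" using u by linarith
    qed
  qed
  have lima: "(f \<longlongrightarrow> Inf ?S) (at_right a)"
  proof (rule order_tendstoI)
    fix l assume u: "l < Inf ?S"
    show "eventually (\<lambda>x. l < f x) (at_right a)"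
    proof (rule eventually_mono[OF eventually_at_right_real[OF ab]])
      fix x assume "x \<in> {a<..<b}"
      then have "Inf ?S \<le> f x" using cInf_lower[OF _ bdb] by auto
      then show "l < f x" using u by linarith
    qed
  next
    fix u assume "Inf ?S < u"
    then obtain x0 where x0: "a < x0" "x0 < b" "f x0 < u"
      using cInf_less_iff[OF ne bdb] by auto
    show "eventually (\<lambda>x. f x < u) (at_right a)"
    proof (rule eventually_mono[OF eventually_at_right_real[OF x0(1)]])
      fix x assume "x \<in> {a<..<x0}"
      then have "f x \<le> f x0" using mono[of x x0] x0 by auto
      then show "f x < u" using x0 by linarith
    qed
  qed
  have "set_integrable lborel (einterval (ereal a) (ereal b)) f'"
    by (rule interval_integral_FTC_nonneg(1)[where F=f and A="Inf ?S" and B="Sup ?S"])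
       (use ab der cont nn lima limb in \<open>auto simp: ereal_tendsto_simps\<close>)
  then show ?thesis by simp
qed



definition cf :: "(real \<Rightarrow> real) \<Rightarrow> nat \<Rightarrow> real" where
  "cf w k = (LINT u:{1<..}|lborel. w u / u^2 * (1/u^2)^k)"

lemma series_rep:
  fixes w :: "real \<Rightarrow> real"
  assumes wm[measurable]: "w \<in> borel_measurable borel" and wn: "\<And>u. 1 < u \<Longrightarrow> 0 \<le> w u"
    and wi: "set_integrable lborel {1<..} (\<lambda>u. w u / u^2)"
    and y: "0 \<le> y" "y < 1"
  shows "set_integrable lborel {1<..} (\<lambda>u. w u / (u^2 - y))"
    and "(LINT u:{1<..}|lborel. w u / (u^2 - y)) = (\<Sum>k. cf w k * y^k)"
    and "\<And>k. 0 \<le> cf w k" and "\<And>k. cf w k \<le> cf w 0"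
proof -
  define f where "f k u = indicator {1<..} u *\<^sub>R (w u / u^2 * (1/u^2)^k * y^k)" for k u
  have meas: "(\<lambda>u. w u / u^2 * (1/u^2)^k * z^k) \<in> borel_measurable borel" for k z by measurable
  have tintz: "set_integrable lborel {1<..} (\<lambda>u. w u / u^2 * (1/u^2)^k * z^k)" if y: "0 \<le> z" "z \<le> 1" for k z
  proof (rule set_integrable_bound[OF wi])
    show "set_borel_measurable lborel {1<..} (\<lambda>u. w u / u^2 * (1/u^2)^k * z^k)"
      unfolding set_borel_measurable_def using meas by measurable
    show "AE x in lborel. x \<in> {1<..} \<longrightarrow> norm (w x / x^2 * (1/x^2)^k * z^k) \<le> norm (w x / x^2)"
    proof (rule AE_I2, intro impI)
      fix x :: real assume "x \<in> {1<..}"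
      then have x: "1 < x" by simp
      have a: "0 \<le> w x / x^2" using wn[OF x] by simp
      have b: "(1/x^2)^k * z^k \<le> 1" "0 \<le> (1/x^2)^k * z^k"
        using x y by (auto intro!: mult_le_one power_le_one simp: power_le_one_iff)
      have le: "w x / x^2 * ((1/x^2)^k * z^k) \<le> w x / x^2"
        using mult_left_mono[OF b(1) a] by simp
      have c0: "0 \<le> w x / x^2 * (1/x^2)^k * z^k"
        using mult_nonneg_nonneg[OF a b(2)] by (simp add: mult.assoc)
      show "norm (w x / x^2 * (1/x^2)^k * z^k) \<le> norm (w x / x^2)"
        unfolding real_norm_def abs_of_nonneg[OF c0] abs_of_nonneg[OF a] using le by (simp add: mult.assoc)
    qed
  qed
  have cfn: "0 \<le> cf w k" for k
    unfolding cf_def set_lebesgue_integral_def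
    by (rule Bochner_Integration.integral_nonneg) (use wn in \<open>auto simp: indicator_def\<close>)
  have tint: "set_integrable lborel {1<..} (\<lambda>u. w u / u^2 * (1/u^2)^k * y^k)" for k
    using tintz y by simp
  show "\<And>k. 0 \<le> cf w k" by (rule cfn)
  have cfle: "cf w k \<le> cf w 0" for k
    unfolding cf_def
  proof (rule set_integral_mono)
    show "set_integrable lborel {1<..} (\<lambda>u. w u / u^2 * (1/u^2)^k)" using tintz[of 1 k] by simp
    show "set_integrable lborel {1<..} (\<lambda>u. w u / u^2 * (1/u^2)^0)" using wi by simp
    fix x :: real assume "x \<in> {1<..}"
    then have x: "1 < x" by simp
    have "(1/x^2)^k \<le> 1" using x by (auto intro!: power_le_one)
    moreover have "0 \<le> w x / x^2" using wn[OF x] by simp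
    ultimately show "w x / x\<^sup>2 * (1 / x\<^sup>2) ^ k \<le> w x / x\<^sup>2 * (1 / x\<^sup>2) ^ 0"
      using mult_left_mono[of "(1/x^2)^k" 1 "w x / x^2"] by simp
  qed
  show "\<And>k. cf w k \<le> cf w 0" by (rule cfle)
  have fint: "integrable lborel (f k)" for k using tint[of k] unfolding set_integrable_def f_def .
  have fval: "integral\<^sup>L lborel (f k) = cf w k * y^k" for k
  proof -
    have "integral\<^sup>L lborel (f k) = (LINT u:{1<..}|lborel. w u / u^2 * (1/u^2)^k * y^k)"
      unfolding f_def set_lebesgue_integral_def by (rule refl)
    also have "\<dots> = cf w k * y^k" unfolding cf_def by (rule set_integral_mult_left)
    finally show ?thesis .
  qed
  have fnn: "0 \<le> f k u" for k u
    using wn y by (auto simp: f_def indicator_def)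
  have sumf: "(\<lambda>k. f k u) sums (indicator {1<..} u *\<^sub>R (w u / (u^2 - y)))" for u
  proof (cases "1 < u")
    case False
    then show ?thesis by (simp add: f_def)
  next
    case True
    have u2: "1 < u^2" using True by (simp add: less_1_mult power2_eq_square)
    have q: "norm (y / u^2) < 1" using y u2 by (auto simp: abs_of_nonneg divide_less_eq)
    have "(\<lambda>k. w u / u^2 * (y/u^2)^k) sums (w u / u^2 * (1 / (1 - y/u^2)))"
      by (rule sums_mult[OF geometric_sums[OF q]])
    moreover have "(\<lambda>k. w u / u^2 * (y/u^2)^k) = (\<lambda>k. f k u)"
      using True by (auto simp: f_def power_divide)
    moreover have "w u / u^2 * (1 / (1 - y/u^2)) = indicator {1<..} u *\<^sub>R (w u / (u^2 - y))"
      using True u2 y by (simp add: field_simps)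
    ultimately show ?thesis by simp
  qed
  have summ1: "AE u in lborel. summable (\<lambda>k. norm (f k u))"
    using sumf fnn by (auto intro!: AE_I2 sums_summable)
  have summ2: "summable (\<lambda>k. \<integral>u. norm (f k u) \<partial>lborel)"
  proof (rule summable_comparison_test[where g="\<lambda>k. cf w 0 * y^k"])
    show "summable (\<lambda>k. cf w 0 * y^k)" using y by (intro summable_mult summable_geometric) auto
    show "\<exists>N. \<forall>n\<ge>N. norm (\<integral>u. norm (f n u) \<partial>lborel) \<le> cf w 0 * y ^ n"
    proof (intro exI allI impI)
      fix n :: nat
      have "(\<integral>u. norm (f n u) \<partial>lborel) = cf w n * y^n" using fnn fval by simp
      then show "norm (\<integral>u. norm (f n u) \<partial>lborel) \<le> cf w 0 * y ^ n"
        using cfn[of n] cfle[of n] y by (simp add: mult_right_mono)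
    qed
  qed
  have eqS: "(\<lambda>u. \<Sum>k. f k u) = (\<lambda>u. indicator {1<..} u *\<^sub>R (w u / (u^2 - y)))"
    using sumf by (auto simp: sums_iff)
  show "set_integrable lborel {1<..} (\<lambda>u. w u / (u^2 - y))"
    using integrable_suminf[OF fint summ1 summ2] unfolding eqS set_integrable_def .
  show "(LINT u:{1<..}|lborel. w u / (u^2 - y)) = (\<Sum>k. cf w k * y^k)"
    using integral_suminf[OF fint summ1 summ2] unfolding eqS set_lebesgue_integral_def fval .
qed


definition PS :: "(nat \<Rightarrow> real) \<Rightarrow> real \<Rightarrow> real" where
  "PS c y = (\<Sum>k. c k * y^k)"

lemma ps_summable:
  fixes c :: "nat \<Rightarrow> real" and y B :: real
  assumes B: "\<And>k. \<bar>c k\<bar> \<le> B" and y: "\<bar>y\<bar> < 1"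
  shows "summable (\<lambda>k. c k * y^k)"
proof (rule summable_comparison_test[where g="\<lambda>k. B * \<bar>y\<bar>^k"])
  show "summable (\<lambda>k. B * \<bar>y\<bar>^k)" using y by (intro summable_mult summable_geometric) auto
  show "\<exists>N. \<forall>n\<ge>N. norm (c n * y ^ n) \<le> B * \<bar>y\<bar> ^ n"
    using B by (auto simp: abs_mult power_abs intro!: mult_right_mono)
qed

lemma ps_diffs_summable:
  fixes c :: "nat \<Rightarrow> real" and y B :: real
  assumes B: "\<And>k. \<bar>c k\<bar> \<le> B" and y: "\<bar>y\<bar> < 1"
  shows "summable (\<lambda>k. diffs c k * y^k)"
  by (rule termdiff_converges[where K=1]) (use y ps_summable[OF B] in auto)

lemma ps_deriv:
  fixes c :: "nat \<Rightarrow> real" and y B :: real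
  assumes B: "\<And>k. \<bar>c k\<bar> \<le> B" and y: "\<bar>y\<bar> < 1"
  shows "(PS c has_real_derivative PS (diffs c) y) (at y)"
  unfolding PS_def
  by (rule termdiffs_strong'[where K=1]) (use y ps_summable[OF B] in auto)

lemma ps_diffs_cont:
  fixes c :: "nat \<Rightarrow> real" and y B :: real
  assumes B: "\<And>k. \<bar>c k\<bar> \<le> B" and y: "\<bar>y\<bar> < 1"
  shows "isCont (PS (diffs c)) y"
proof -
  have "(PS (diffs c) has_real_derivative PS (diffs (diffs c)) y) (at y)"
    unfolding PS_def
    by (rule termdiffs_strong'[where K=1]) (use y ps_diffs_summable[OF B] in auto)
  then show ?thesis by (rule DERIV_isCont)
qed

lemma bounded_cont_integrable:
  fixes f :: "real \<Rightarrow> real"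
  assumes c: "continuous_on {a<..<b} f" and K: "\<And>x. a < x \<Longrightarrow> x < b \<Longrightarrow> \<bar>f x\<bar> \<le> K"
  shows "set_integrable lborel {a<..<b} f"
proof (rule set_integrable_bound[where f="\<lambda>_. K"])
  show "set_integrable lborel {a<..<b} (\<lambda>_. K)"
    by (rule set_integrable_subset[OF borel_integrable_atLeastAtMost'[of a b]]) auto
  show "set_borel_measurable lborel {a<..<b} f"
    unfolding set_borel_measurable_def
    using borel_measurable_continuous_on_indicator[OF _ c] by simp
  show "AE x in lborel. x \<in> {a<..<b} \<longrightarrow> norm (f x) \<le> norm K"
    using K by (auto intro!: AE_I2) (smt (verit) greaterThanLessThan_iff)
qed

lemma deriv_sign_decr:
  fixes f :: "real \<Rightarrow> real"
  assumes d: "(f has_real_derivative D) (at x)" and ab: "a < x" "x < b"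
    and dec: "\<And>s t. a < s \<Longrightarrow> s \<le> t \<Longrightarrow> t < b \<Longrightarrow> f t \<le> f s"
  shows "D \<le> 0"
proof (rule ccontr)
  assume "\<not> D \<le> 0"
  then have "0 < D" by simp
  from DERIV_pos_inc_right[OF d this] obtain e where e: "e > 0" "\<And>h. 0 < h \<Longrightarrow> h < e \<Longrightarrow> f x < f (x + h)"
    by blast
  define h where "h = min (e/2) ((b - x)/2)"
  have h1: "h \<le> (b-x)/2" unfolding h_def by (rule min.cobounded2)
  have h2: "h \<le> e/2" unfolding h_def by (rule min.cobounded1)
  have h3: "0 < h" using e ab unfolding h_def by simp
  have h: "0 < h" "h < e" "x + h < b" using e ab h1 h2 h3 by auto
  have "f x < f (x + h)" using e(2) h by auto
  moreover have "f (x + h) \<le> f x" using dec[of x "x+h"] ab h by auto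
  ultimately show False by simp
qed




definition WW :: "real \<Rightarrow> real" where "WW u = L u * ln u"

lemma L_meas[measurable]: "L \<in> borel_measurable borel"
  unfolding L_def by measurable

lemma WW_meas[measurable]: "WW \<in> borel_measurable borel"
  unfolding WW_def by measurable

lemma L_nonneg: "1 < u \<Longrightarrow> 0 \<le> L u"
  unfolding L_def by simp

lemma WW_nonneg: "1 < u \<Longrightarrow> 0 \<le> WW u"
  unfolding WW_def using L_nonneg by simp

lemma norm_le_nonneg: "0 \<le> (a::real) \<Longrightarrow> a \<le> b \<Longrightarrow> norm a \<le> norm b"
  by simp

lemma WW1_int: "set_integrable lborel {1<..} (\<lambda>u. WW u / (u^2 - 1))"
proof (rule set_integrable_bound[where f="\<lambda>u. 4 * (1 / (u * sqrt (u - 1)))"])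
  show "set_integrable lborel {1<..} (\<lambda>u. 4 * (1 / (u * sqrt (u - 1))))"
    by (rule set_integrable_mult_right) (rule D_int)
  show "set_borel_measurable lborel {1<..} (\<lambda>u. WW u / (u^2 - 1))"
    unfolding set_borel_measurable_def by measurable
  show "AE x in lborel. x \<in> {1<..} \<longrightarrow> norm (WW x / (x^2 - 1)) \<le> norm (4 * (1 / (x * sqrt (x - 1))))"
  proof (rule AE_I2, intro impI)
    fix x :: real assume "x \<in> {1<..}"
    then have x: "1 < x" by simp
    have x2: "0 < x^2 - 1" using x by (simp add: less_1_mult power2_eq_square)
    have "0 \<le> WW x / (x^2 - 1)" using WW_nonneg[OF x] x2 by simp
    moreover have "0 \<le> 4 * (1 / (x * sqrt (x - 1)))" using x by simp
    moreover have "WW x / (x^2 - 1) \<le> 4 * (1 / (x * sqrt (x - 1)))"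
      using W_bound[OF x] unfolding WW_def L_def .
    ultimately show "norm (WW x / (x^2 - 1)) \<le> norm (4 * (1 / (x * sqrt (x - 1))))"
      by (intro norm_le_nonneg)
  qed
qed

lemma WW_int: "set_integrable lborel {1<..} (\<lambda>u. WW u / u^2)"
proof (rule set_integrable_bound[OF WW1_int])
  show "set_borel_measurable lborel {1<..} (\<lambda>u. WW u / u^2)"
    unfolding set_borel_measurable_def by measurable
  show "AE x in lborel. x \<in> {1<..} \<longrightarrow> norm (WW x / x^2) \<le> norm (WW x / (x^2 - 1))"
  proof (rule AE_I2, intro impI)
    fix x :: real assume "x \<in> {1<..}"
    then have x: "1 < x" by simp
    have x2: "0 < x^2 - 1" using x by (simp add: less_1_mult power2_eq_square)
    have "WW x / x^2 \<le> WW x / (x^2 - 1)"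
      using WW_nonneg[OF x] x2 mult_pos_pos[of "x^2" "x^2-1"] x by (intro divide_left_mono) auto
    moreover have "0 \<le> WW x / x^2" using WW_nonneg[OF x] by simp
    ultimately show "norm (WW x / x^2) \<le> norm (WW x / (x^2 - 1))" by (intro norm_le_nonneg)
  qed
qed

lemmas serL = series_rep[OF L_meas L_nonneg L_int, simplified]
lemmas serW = series_rep[OF WW_meas WW_nonneg WW_int, simplified]

lemma cL_bound: "\<bar>cf L k\<bar> \<le> cf L 0"
  using serL(3)[of 0 k] serL(4)[of 0 k] by simp

lemma cW_bound: "\<bar>cf WW k\<bar> \<le> cf WW 0"
  using serW(3)[of 0 k] serW(4)[of 0 k] by simp

lemma cL0: "cf L 0 = 2 * ln 2"
  unfolding cf_def using L_int_val by simp

lemma ps_nonneg: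
  assumes "\<And>k. 0 \<le> c k" "\<And>k. \<bar>c k\<bar> \<le> B" "0 \<le> y" "y < 1"
  shows "0 \<le> PS c y"
  unfolding PS_def using assms by (intro suminf_nonneg ps_summable[of c B]) auto

lemma diffs_nonneg:
  assumes "\<And>k. 0 \<le> (c::nat\<Rightarrow>real) k" shows "0 \<le> diffs c k"
  unfolding diffs_def using assms[of "Suc k"] by simp

lemma ps_head:
  assumes "\<And>k. 0 \<le> c k" "\<And>k. \<bar>c k\<bar> \<le> B" "0 \<le> y" "y < 1"
  shows "c 0 \<le> PS c y" and "PS c y - c 0 \<le> y * PS (diffs c) y"
proof -
  have s: "summable (\<lambda>k. c k * y^k)" using assms by (intro ps_summable[of c B]) auto
  have sd: "summable (\<lambda>k. diffs c k * y^k)" using assms by (intro ps_diffs_summable[of c B]) auto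
  have h: "(\<Sum>k. c (Suc k) * y^(Suc k)) = PS c y - c 0"
    using suminf_split_head[OF s] unfolding PS_def by simp
  have s1: "summable (\<lambda>k. c (Suc k) * y^(Suc k))"
    using s by (subst summable_Suc_iff)
  have "0 \<le> (\<Sum>k. c (Suc k) * y^(Suc k))"
    using assms s1 by (intro suminf_nonneg) auto
  then show "c 0 \<le> PS c y" using h by simp
  have "(\<Sum>k. c (Suc k) * y^(Suc k)) \<le> (\<Sum>k. y * (diffs c k * y^k))"
  proof (rule suminf_le)
    show "summable (\<lambda>k. y * (diffs c k * y^k))" using sd by (rule summable_mult)
    show "summable (\<lambda>k. c (Suc k) * y^(Suc k))" by (rule s1)
    fix k
    have "0 \<le> of_nat k * c (Suc k)" using assms(1)[of "Suc k"] by simp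
    then have "c (Suc k) \<le> of_nat (Suc k) * c (Suc k)" by (simp add: algebra_simps)
    then have "c (Suc k) * y^(Suc k) \<le> of_nat (Suc k) * c (Suc k) * y^(Suc k)"
      using assms(3) by (intro mult_right_mono) auto
    then show "c (Suc k) * y^(Suc k) \<le> y * (diffs c k * y^k)"
      by (simp add: diffs_def algebra_simps)
  qed
  also have "\<dots> = y * PS (diffs c) y" unfolding PS_def using sd by (rule suminf_mult)
  finally show "PS c y - c 0 \<le> y * PS (diffs c) y" using h by simp
qed


lemma ell_eq: "0 < u \<Longrightarrow> 0 < v \<Longrightarrow> ell u v = - ln u - ln v"
  by (simp add: ell_def ln_div ln_mult)

lemma sq_lt1: "0 < v \<Longrightarrow> v < 1 \<Longrightarrow> 0 \<le> v^2 \<and> v^2 < (1::real)"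
  by (simp add: power_less_one_iff)

lemma calA_rep:
  assumes v: "0 < v" "v < 1"
  shows "set_integrable lborel {1<..} (\<lambda>u. L u * ell u v / (u^2 - v^2))"
    and "calA v = - PS (cf WW) (v^2) - ln v * PS (cf L) (v^2)"
proof -
  have y: "0 \<le> v^2" "v^2 < 1" using sq_lt1[OF v] by auto
  note iL = serL(1)[OF y] and eL = serL(2)[OF y] and iW = serW(1)[OF y] and eW = serW(2)[OF y]
  have pw: "\<forall>u. u \<in> {1<..} \<longrightarrow> L u * ell u v / (u^2 - v^2) = (- ln v) * (L u / (u^2 - v^2)) - WW u / (u^2 - v^2)"
    using v by (auto simp: ell_eq WW_def algebra_simps diff_divide_distrib)
  have i: "set_integrable lborel {1<..} (\<lambda>u. (- ln v) * (L u / (u^2 - v^2)) - WW u / (u^2 - v^2))"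
    using iL iW by (intro set_integral_diff(1) set_integrable_mult_right) auto
  show "set_integrable lborel {1<..} (\<lambda>u. L u * ell u v / (u^2 - v^2))"
    using i pw by (subst set_integrable_cong[OF refl refl]) auto
  have "calA v = (LINT u:{1<..}|lborel. (- ln v) * (L u / (u^2 - v^2)) - WW u / (u^2 - v^2))"
    unfolding calA_def by (rule set_lebesgue_integral_cong) (use pw in auto)
  also have "\<dots> = (LINT u:{1<..}|lborel. (- ln v) * (L u / (u^2 - v^2))) - (LINT u:{1<..}|lborel. WW u / (u^2 - v^2))"
  proof -
    have iL': "set_integrable lborel {1<..} (\<lambda>u. (- ln v) * (L u / (u^2 - v^2)))"
      by (rule set_integrable_mult_right) (rule iL)
    show ?thesis by (rule set_integral_diff(2)[OF iL' iW])
  qed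
  also have "\<dots> = (- ln v) * (LINT u:{1<..}|lborel. L u / (u^2 - v^2)) - (LINT u:{1<..}|lborel. WW u / (u^2 - v^2))"
    by (simp only: set_integral_mult_right)
  finally show "calA v = - PS (cf WW) (v^2) - ln v * PS (cf L) (v^2)"
    unfolding PS_def using eL eW by simp
qed

lemma k_decr:
  fixes u v1 v2 :: real
  assumes u: "1 < u" and v: "0 < v1" "v1 \<le> v2" "v2 < 1"
  shows "(- ln u - ln v2) / (u^2 - v2^2) \<le> (- ln u - ln v1) / (u^2 - v1^2)"
proof (rule DERIV_nonpos_imp_decreasing_open[where f="\<lambda>t::real. (- ln u - ln t) / (u^2 - t^2)", OF v(2)])
  fix x assume x: "v1 < x" "x < v2"
  then have x0: "0 < x" "x < 1" using v by auto
  have ux: "x^2 < u^2" using x0 u by (simp add: power_strict_mono)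
  have nz: "u^2 - x^2 \<noteq> 0" using ux by simp
  let ?a = "ln u + ln x"
  have l: "-2 * ?a \<le> 1 / (u^2 * x^2) - 1"
  proof -
    have "ln (1 / (u^2 * x^2)) \<le> 1 / (u^2 * x^2) - 1" using u x0 by (intro ln_le_minus_one) simp
    moreover have "ln (1 / (u^2 * x^2)) = -2 * ?a" using u x0 by (simp add: ln_div ln_mult ln_realpow)
    ultimately show ?thesis by simp
  qed
  have m: "x * (-2 * ?a) \<le> x * (1 / (u^2 * x^2) - 1)" using l x0 by (intro mult_left_mono) auto
  have e1: "x * (1 / (u^2 * x^2) - 1) = 1 / (u^2 * x) - x" using x0 u by (simp add: field_simps power2_eq_square)
  have e2: "(1/x) * (u^2 - x^2) = u^2 / x - x" using x0 by (simp add: field_simps power2_eq_square)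
  have e3: "1 / (u^2 * x) \<le> u^2 / x"
  proof -
    have uu: "1 \<le> u * u" using less_1_mult[OF u u] by simp
    have "1 / u^2 \<le> 1" using uu by (simp add: power2_eq_square)
    also have "1 \<le> u^2" using uu by (simp add: power2_eq_square)
    finally have "1 / u^2 \<le> u^2" .
    then have A: "(1/u^2)/x \<le> u^2/x" using x0 by (intro divide_right_mono) auto
    have B: "1/(u^2*x) = (1/u^2)/x" by simp
    show ?thesis unfolding B by (rule A)
  qed
  have N: "- (1/x) * (u^2 - x^2) - 2 * x * ?a \<le> 0" using m e1 e2 e3 by (simp add: algebra_simps)
  have D: "((\<lambda>t. (- ln u - ln t) / (u^2 - t^2)) has_real_derivative
      ((- (1/x)) * (u^2 - x^2) - (- ln u - ln x) * (- (2 * x))) / ((u^2 - x^2) * (u^2 - x^2))) (at x)"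
    using x0 nz by (intro DERIV_divide) (auto intro!: derivative_eq_intros)
  have eqN: "(- (1/x)) * (u^2 - x^2) - (- ln u - ln x) * (- (2 * x)) = - (1/x) * (u^2 - x^2) - 2 * x * ?a"
    by (simp add: algebra_simps)
  have "((- (1/x)) * (u^2 - x^2) - (- ln u - ln x) * (- (2 * x))) / ((u^2 - x^2) * (u^2 - x^2)) \<le> 0"
    unfolding eqN by (rule divide_nonpos_nonneg[OF N zero_le_square])
  then show "\<exists>y. ((\<lambda>t. (- ln u - ln t) / (u^2 - t^2)) has_real_derivative y) (at x) \<and> y \<le> 0"
    using D by blast
next
  show "continuous_on {v1..v2} (\<lambda>t. (- ln u - ln t) / (u^2 - t^2))"
  proof (rule continuous_at_imp_continuous_on, intro ballI)
    fix t assume t: "t \<in> {v1..v2}"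
    then have t0: "0 < t" using v by auto
    have "t^2 < u^2" using t v u by (intro power_strict_mono) auto
    then have "u^2 - t^2 \<noteq> 0" by simp
    then show "isCont (\<lambda>t. (- ln u - ln t) / (u^2 - t^2)) t" using t0
      by (intro continuous_intros) auto
  qed
qed


lemma calA_decr:
  assumes v: "0 < v1" "v1 \<le> v2" "v2 < 1"
  shows "calA v2 \<le> calA v1"
  unfolding calA_def
proof (rule set_integral_mono)
  show "set_integrable lborel {1<..} (\<lambda>u. L u * ell u v2 / (u^2 - v2^2))"
    using v by (intro calA_rep(1)) auto
  show "set_integrable lborel {1<..} (\<lambda>u. L u * ell u v1 / (u^2 - v1^2))"
    using v by (intro calA_rep(1)) auto
  fix u :: real assume "u \<in> {1<..}"
  then have u: "1 < u" by simp
  have "L u * ((- ln u - ln v2) / (u^2 - v2^2)) \<le> L u * ((- ln u - ln v1) / (u^2 - v1^2))"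
    using k_decr[OF u v] L_nonneg[OF u] by (intro mult_left_mono)
  then show "L u * ell u v2 / (u^2 - v2^2) \<le> L u * ell u v1 / (u^2 - v1^2)"
    using u v by (simp add: ell_eq)
qed



lemma deriv_integrable_nonpos:
  fixes f f' :: "real \<Rightarrow> real"
  assumes ab: "a < b"
    and der: "\<And>x. a < x \<Longrightarrow> x < b \<Longrightarrow> (f has_real_derivative f' x) (at x)"
    and cont: "\<And>x. a < x \<Longrightarrow> x < b \<Longrightarrow> isCont f' x"
    and np: "\<And>x. a < x \<Longrightarrow> x < b \<Longrightarrow> f' x \<le> 0"
    and bd: "\<And>x. a < x \<Longrightarrow> x < b \<Longrightarrow> \<bar>f x\<bar> \<le> B"
  shows "set_integrable lborel {a<..<b} f'"
proof -
  have "set_integrable lborel {a<..<b} (\<lambda>x. - f' x)"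
    by (rule deriv_integrable_nonneg[where f="\<lambda>x. - f x" and B=B])
       (use ab der cont np bd in \<open>auto intro!: DERIV_minus continuous_intros\<close>)
  then have "set_integrable lborel {a<..<b} (\<lambda>x. (-1) * (- f' x))"
    by (intro set_integrable_mult_right)
  then show ?thesis by simp
qed

definition PP :: "real \<Rightarrow> real" where "PP v = PS (cf L) (v^2)"
definition dP :: "real \<Rightarrow> real" where "dP v = PS (diffs (cf L)) (v^2) * (2 * v)"
definition QQ :: "real \<Rightarrow> real" where "QQ v = - PS (cf WW) (v^2)"
definition dQ :: "real \<Rightarrow> real" where "dQ v = - (PS (diffs (cf WW)) (v^2) * (2 * v))"
definition AA :: "real \<Rightarrow> real" where "AA v = QQ v - ln v * PP v"
definition dA :: "real \<Rightarrow> real" where "dA v = dQ v - (inverse v * PP v + dP v * ln v)"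
definition RR :: "real \<Rightarrow> real" where "RR v = - (ln v * (PP v - 2 * ln 2))"
definition dR :: "real \<Rightarrow> real" where "dR v = - (inverse v * (PP v - 2 * ln 2) + dP v * ln v)"

lemma sq_abs: "\<bar>v\<bar> < 1 \<Longrightarrow> \<bar>v^2\<bar> < (1::real)"
  using abs_square_less_1[of v] by simp

lemma sq_deriv: "((\<lambda>v::real. v^2) has_real_derivative 2 * v) (at v)"
  by (auto intro!: derivative_eq_intros)

lemma PP_der: "\<bar>v\<bar> < 1 \<Longrightarrow> (PP has_real_derivative dP v) (at v)"
proof -
  assume v: "\<bar>v\<bar> < 1"
  have "((\<lambda>v. PS (cf L) (v^2)) has_real_derivative PS (diffs (cf L)) (v^2) * (2 * v)) (at v)"
    by (rule DERIV_chain2[OF ps_deriv[OF cL_bound sq_abs[OF v]] sq_deriv])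
  then show ?thesis unfolding PP_def[abs_def] dP_def .
qed

lemma QQ_der: "\<bar>v\<bar> < 1 \<Longrightarrow> (QQ has_real_derivative dQ v) (at v)"
proof -
  assume v: "\<bar>v\<bar> < 1"
  have "((\<lambda>v. PS (cf WW) (v^2)) has_real_derivative PS (diffs (cf WW)) (v^2) * (2 * v)) (at v)"
    by (rule DERIV_chain2[OF ps_deriv[OF cW_bound sq_abs[OF v]] sq_deriv])
  then show ?thesis unfolding QQ_def[abs_def] dQ_def by (rule DERIV_minus)
qed

lemma AA_der: "0 < v \<Longrightarrow> v < 1 \<Longrightarrow> (AA has_real_derivative dA v) (at v)"
proof -
  assume v: "0 < v" "v < 1"
  then have av: "\<bar>v\<bar> < 1" by simp
  have "((\<lambda>v. QQ v - ln v * PP v) has_real_derivative dQ v - (inverse v * PP v + dP v * ln v)) (at v)"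
    by (intro DERIV_diff DERIV_mult QQ_der[OF av] PP_der[OF av] DERIV_ln v)
  then show ?thesis unfolding AA_def[abs_def] dA_def .
qed

lemma RR_der: "0 < v \<Longrightarrow> v < 1 \<Longrightarrow> (RR has_real_derivative dR v) (at v)"
proof -
  assume v: "0 < v" "v < 1"
  then have av: "\<bar>v\<bar> < 1" by simp
  have "((\<lambda>v. - (ln v * (PP v - 2 * ln 2))) has_real_derivative - (inverse v * (PP v - 2 * ln 2) + (dP v - 0) * ln v)) (at v)"
    by (intro DERIV_minus DERIV_mult DERIV_diff PP_der[OF av] DERIV_ln v DERIV_const)
  then show ?thesis unfolding RR_def[abs_def] dR_def by simp
qed

lemma PP_cont: "\<bar>v\<bar> < 1 \<Longrightarrow> isCont PP v"
  using PP_der DERIV_isCont by blast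

lemma dP_cont: "\<bar>v\<bar> < 1 \<Longrightarrow> isCont dP v"
proof -
  assume v: "\<bar>v\<bar> < 1"
  have "isCont (\<lambda>v. PS (diffs (cf L)) (v^2)) v"
    by (rule isCont_o2[where f="\<lambda>v. v^2", OF _ ps_diffs_cont[OF cL_bound sq_abs[OF v]]]) (intro continuous_intros)
  then have "isCont (\<lambda>v. PS (diffs (cf L)) (v^2) * (2 * v)) v" by (intro continuous_intros)
  then show ?thesis unfolding dP_def[abs_def] .
qed

lemma dQ_cont: "\<bar>v\<bar> < 1 \<Longrightarrow> isCont dQ v"
proof -
  assume v: "\<bar>v\<bar> < 1"
  have "isCont (\<lambda>v. PS (diffs (cf WW)) (v^2)) v"
    by (rule isCont_o2[where f="\<lambda>v. v^2", OF _ ps_diffs_cont[OF cW_bound sq_abs[OF v]]]) (intro continuous_intros)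
  then have "isCont (\<lambda>v. - (PS (diffs (cf WW)) (v^2) * (2 * v))) v" by (intro continuous_intros)
  then show ?thesis unfolding dQ_def[abs_def] .
qed

lemma dA_cont: "0 < v \<Longrightarrow> v < 1 \<Longrightarrow> isCont dA v"
proof -
  assume v: "0 < v" "v < 1"
  then have av: "\<bar>v\<bar> < 1" by simp
  have "isCont (\<lambda>v. dQ v - (inverse v * PP v + dP v * ln v)) v"
    using v by (intro continuous_intros dQ_cont[OF av] PP_cont[OF av] dP_cont[OF av]) auto
  then show ?thesis unfolding dA_def[abs_def] .
qed

lemma dR_cont: "0 < v \<Longrightarrow> v < 1 \<Longrightarrow> isCont dR v"
proof -
  assume v: "0 < v" "v < 1"
  then have av: "\<bar>v\<bar> < 1" by simp
  have "isCont (\<lambda>v. - (inverse v * (PP v - 2 * ln 2) + dP v * ln v)) v"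
    using v by (intro continuous_intros PP_cont[OF av] dP_cont[OF av]) auto
  then show ?thesis unfolding dR_def[abs_def] .
qed


lemma ps_diffs_nonneg:
  assumes c: "\<And>k. 0 \<le> (c::nat \<Rightarrow> real) k" "\<And>k. \<bar>c k\<bar> \<le> B" and y: "0 \<le> y" "y < 1"
  shows "0 \<le> PS (diffs c) y"
  unfolding PS_def using y diffs_nonneg[OF c(1)]
  by (intro suminf_nonneg ps_diffs_summable[OF c(2)]) auto

lemma cL_nn: "0 \<le> cf L k" using serL(3)[of 0 k] by simp
lemma cW_nn: "0 \<le> cf WW k" using serW(3)[of 0 k] by simp

lemma dQ_nonpos: "0 < v \<Longrightarrow> v < 1 \<Longrightarrow> dQ v \<le> 0"
proof -
  assume v: "0 < v" "v < 1"
  have "0 \<le> PS (diffs (cf WW)) (v^2)"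
    using sq_lt1[OF v] by (intro ps_diffs_nonneg[where c="cf WW" and B="cf WW 0", OF cW_nn cW_bound]) auto
  then show ?thesis unfolding dQ_def using v by simp
qed

definition MW :: real where "MW = (LINT u:{1<..}|lborel. WW u / (u^2 - 1))"

lemma FW_bounds:
  assumes y: "0 \<le> y" "y < 1"
  shows "0 \<le> PS (cf WW) y" "PS (cf WW) y \<le> MW"
proof -
  show "0 \<le> PS (cf WW) y" using y by (intro ps_nonneg[where c="cf WW" and B="cf WW 0", OF cW_nn cW_bound]) auto
  have "PS (cf WW) y = (LINT u:{1<..}|lborel. WW u / (u^2 - y))"
    unfolding PS_def using serW(2)[OF y] by simp
  also have "\<dots> \<le> MW" unfolding MW_def
  proof (rule set_integral_mono[OF serW(1)[OF y] WW1_int])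
    fix u :: real assume "u \<in> {1<..}"
    then have u: "1 < u" by simp
    have u2: "0 < u^2 - 1" using u by (simp add: less_1_mult power2_eq_square)
    show "WW u / (u^2 - y) \<le> WW u / (u^2 - 1)"
      using WW_nonneg[OF u] u2 y by (intro divide_left_mono) (auto intro!: mult_pos_pos)
  qed
  finally show "PS (cf WW) y \<le> MW" .
qed

lemma QQ_bound: "0 < v \<Longrightarrow> v < 1 \<Longrightarrow> \<bar>QQ v\<bar> \<le> MW"
  using FW_bounds[OF sq_lt1[THEN conjunct1] sq_lt1[THEN conjunct2]] unfolding QQ_def by fastforce

lemma MW_nonneg: "0 \<le> MW"
  using FW_bounds[of 0] by simp

lemma PP_ge: "0 < v \<Longrightarrow> v < 1 \<Longrightarrow> 2 * ln 2 \<le> PP v"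
proof -
  assume v: "0 < v" "v < 1"
  have y: "0 \<le> v^2" "v^2 < 1" using sq_lt1[OF v] by auto
  show ?thesis using ps_head(1)[where c="cf L" and B="cf L 0", OF cL_nn cL_bound y] cL0 unfolding PP_def by simp
qed

lemma AA_eq: "0 < v \<Longrightarrow> v < 1 \<Longrightarrow> calA v = AA v"
  using calA_rep(2) unfolding AA_def QQ_def PP_def by simp

lemma dA_nonpos: "0 < v \<Longrightarrow> v < 1 \<Longrightarrow> dA v \<le> 0"
proof -
  assume v: "0 < v" "v < 1"
  show ?thesis
  proof (rule deriv_sign_decr[OF AA_der[OF v] v])
    fix s t :: real assume "0 < s" "s \<le> t" "t < 1"
    then show "AA t \<le> AA s" using calA_decr[of s t] AA_eq[of s] AA_eq[of t] by simp
  qed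
qed

lemma dR_nonneg: "0 < v \<Longrightarrow> v < 1/2 \<Longrightarrow> 0 \<le> dR v"
proof -
  assume v: "0 < v" "v < 1/2"
  have y: "0 \<le> v^2" "v^2 < 1" using sq_lt1[of v] v by auto
  define D where "D = PS (diffs (cf L)) (v^2)"
  have D0: "0 \<le> D" unfolding D_def using y by (intro ps_diffs_nonneg[where c="cf L" and B="cf L 0", OF cL_nn cL_bound]) auto
  have h1: "PP v - 2 * ln 2 \<le> v^2 * D"
    using ps_head(2)[where c="cf L" and B="cf L 0", OF cL_nn cL_bound y] cL0 unfolding PP_def D_def by simp
  have h2: "inverse v * (PP v - 2 * ln 2) \<le> v * D"
  proof -
    have "inverse v * (PP v - 2 * ln 2) \<le> inverse v * (v^2 * D)"
      using h1 v by (intro mult_left_mono) auto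
    also have "\<dots> = v * D" using v by (simp add: power2_eq_square field_simps)
    finally show ?thesis .
  qed
  have lnv: "1 \<le> - 2 * ln v"
  proof -
    have "ln v < ln (1/2)" using v by (intro ln_less_cancel_iff[THEN iffD2]) auto
    also have "ln (1/2::real) = - ln 2" by (simp add: ln_div)
    finally show ?thesis using ln2_ge_two_thirds by linarith
  qed
  have "dR v = - (inverse v * (PP v - 2 * ln 2)) - 2 * v * D * ln v"
    unfolding dR_def dP_def D_def by (simp add: algebra_simps)
  also have "\<dots> \<ge> - (v * D) - 2 * v * D * ln v" using h2 by simp
  moreover have "- (v * D) - 2 * v * D * ln v = (v * D) * (- 1 - 2 * ln v)" by (simp add: algebra_simps)
  moreover have "0 \<le> (v * D) * (- 1 - 2 * ln v)" using v D0 lnv by (intro mult_nonneg_nonneg) auto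
  ultimately show ?thesis by linarith
qed


theorem lemma3:
  fixes \<delta> :: real and \<chi>0 :: "real \<Rightarrow> real"
  assumes "\<delta> > 0" and "2 * \<delta> < 1"
    and "smooth_on {0<..<1} \<chi>0"
    and "\<And>v. 0 \<le> v \<Longrightarrow> v \<le> \<delta> \<Longrightarrow> \<chi>0 v = 1"
    and "\<And>v. 2 * \<delta> \<le> v \<Longrightarrow> v < 1 \<Longrightarrow> \<chi>0 v = 0"
  shows "W11_01 (\<lambda>v. calA v - 2 * ln 2 * \<chi>0 v * ln (1 / v))"
proof -
  note d0 = assms(1) and d1 = assms(2) and sm = assms(3) and c1 = assms(4) and c0 = assms(5)
  have dchi: "(\<chi>0 has_real_derivative deriv \<chi>0 x) (at x)" if "0 < x" "x < 1" for x
  proof -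
    have "\<forall>n. \<forall>x\<in>{0<..<1}. ((deriv ^^ n) \<chi>0) differentiable (at x)" using sm unfolding smooth_on_def .
    moreover have "x \<in> {0<..<1}" using that by simp
    ultimately have "((deriv ^^ 0) \<chi>0) differentiable (at x)" by blast
    then show ?thesis using DERIV_deriv_iff_real_differentiable by simp
  qed
  have cchi: "isCont \<chi>0 x" if "0 < x" "x < 1" for x
    using dchi[OF that] DERIV_isCont by blast
  have cdchi: "isCont (deriv \<chi>0) x" if "0 < x" "x < 1" for x
  proof -
    have "\<forall>n. \<forall>x\<in>{0<..<1}. ((deriv ^^ n) \<chi>0) differentiable (at x)" using sm unfolding smooth_on_def .
    moreover have "x \<in> {0<..<1}" using that by simp
    ultimately have "((deriv ^^ 1) \<chi>0) differentiable (at x)" by blast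
    then show ?thesis by (simp add: differentiable_imp_continuous_within)
  qed
  have dchi0: "deriv \<chi>0 x = 0" if "0 < x" "x < \<delta>" for x
  proof -
    have "((\<lambda>_. 1::real) has_real_derivative 0) (at x)" by simp
    then have "(\<chi>0 has_real_derivative 0) (at x)"
      by (rule has_field_derivative_transform_within_open[where S="{0<..<\<delta>}"]) (use that c1 in auto)
    then show ?thesis using dchi[of x] that d1 DERIV_unique by force
  qed
  have dchi1: "deriv \<chi>0 x = 0" if "2 * \<delta> < x" "x < 1" for x
  proof -
    have "((\<lambda>_. 0::real) has_real_derivative 0) (at x)" by simp
    then have "(\<chi>0 has_real_derivative 0) (at x)"
      by (rule has_field_derivative_transform_within_open[where S="{2*\<delta><..<1}"]) (use that c0 in auto)
    then show ?thesis using dchi[of x] that d0 DERIV_unique by force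
  qed
  define G where "G v = AA v + 2 * ln 2 * (\<chi>0 v * ln v)" for v
  define h where "h v = dA v + 2 * ln 2 * (deriv \<chi>0 v * ln v + inverse v * \<chi>0 v)" for v
  have Gder: "(G has_real_derivative h v) (at v)" if v: "0 < v" "v < 1" for v
    unfolding G_def[abs_def] h_def
    by (intro DERIV_add DERIV_cmult DERIV_mult AA_der dchi DERIV_ln v)
  have Gcont: "isCont G v" if "0 < v" "v < 1" for v using Gder[OF that] DERIV_isCont by blast
  have hcont: "isCont h v" if v: "0 < v" "v < 1" for v
    unfolding h_def[abs_def] using v
    by (intro continuous_intros dA_cont cchi cdchi) auto
  have gG: "calA v - 2 * ln 2 * \<chi>0 v * ln (1 / v) = G v" if "0 < v" "v < 1" for v
    using that AA_eq[OF that] unfolding G_def by (simp add: ln_div)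
  have gder: "((\<lambda>v. calA v - 2 * ln 2 * \<chi>0 v * ln (1 / v)) has_real_derivative h v) (at v)"
    if v: "0 < v" "v < 1" for v
    by (rule has_field_derivative_transform_within_open[OF Gder[OF v], where S="{0<..<1}"])
       (use v gG in auto)
  have dh: "\<delta> < 1/2" using d1 by simp
  have RRnn: "0 \<le> RR v" if "0 < v" "v < 1" for v
  proof -
    have "ln v \<le> 0" using that by simp
    moreover have "0 \<le> PP v - 2 * ln 2" using PP_ge[OF that] by simp
    ultimately show ?thesis unfolding RR_def by (simp add: mult_nonpos_nonneg)
  qed
  have RRle: "RR v \<le> RR \<delta>" if "0 < v" "v \<le> \<delta>" for v
  proof (rule DERIV_nonneg_imp_increasing_open[OF that(2)])
    fix x assume "v < x" "x < \<delta>"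
    then have x: "0 < x" "x < 1" "x < 1/2" using that dh by auto
    then show "\<exists>y. (RR has_real_derivative y) (at x) \<and> 0 \<le> y"
      using RR_der[OF x(1,2)] dR_nonneg[OF x(1,3)] by blast
  next
    show "continuous_on {v..\<delta>} RR"
    proof (rule continuous_at_imp_continuous_on, intro ballI)
      fix x assume "x \<in> {v..\<delta>}"
      then have "0 < x" "x < 1" using that dh by auto
      then show "isCont RR x" using RR_der DERIV_isCont by blast
    qed
  qed
  have AAle: "AA v \<le> AA (2*\<delta>)" if "2*\<delta> \<le> v" "v < 1" for v
    using calA_decr[of "2*\<delta>" v] AA_eq[of v] AA_eq[of "2*\<delta>"] that d0 d1 by simp
  have AAge: "- MW \<le> AA v" if "0 < v" "v < 1" for v
  proof -
    have "0 \<le> - ln v * PP v" using that PP_ge[OF that] ln2_ge_two_thirds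
      by (intro mult_nonneg_nonneg) auto
    then show ?thesis using QQ_bound[OF that] unfolding AA_def by linarith
  qed
  have AAbd: "\<bar>AA v\<bar> \<le> MW + \<bar>AA (2*\<delta>)\<bar>" if "2*\<delta> \<le> v" "v < 1" for v
    using AAle[OF that] AAge[of v] that d0 MW_nonneg by (auto simp: abs_le_iff)
  have GQR: "G v = QQ v + RR v" if "0 < v" "v \<le> \<delta>" for v
    using c1[of v] that unfolding G_def AA_def RR_def by (simp add: algebra_simps)
  have GA: "G v = AA v" if "2*\<delta> \<le> v" "v < 1" for v
    using c0[OF that] unfolding G_def by simp
  obtain K1 where K1: "\<And>v. v \<in> {\<delta>..2*\<delta>} \<Longrightarrow> \<bar>G v\<bar> \<le> K1"
  proof -
    have "continuous_on {\<delta>..2*\<delta>} G"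
      by (rule continuous_at_imp_continuous_on) (use Gcont d0 d1 in auto)
    then have "compact (G ` {\<delta>..2*\<delta>})" by (intro compact_continuous_image) auto
    then obtain B where B: "\<forall>y\<in>G ` {\<delta>..2*\<delta>}. norm y \<le> B" using compact_imp_bounded bounded_iff by metis
    have "\<bar>G v\<bar> \<le> B" if "v \<in> {\<delta>..2*\<delta>}" for v using B that by auto
    then show ?thesis using that by blast
  qed
  have K1nn: "0 \<le> K1" using K1[of \<delta>] d0 by auto
  define K where "K = MW + RR \<delta> + K1 + \<bar>AA (2*\<delta>)\<bar>"
  have Gbd: "\<bar>G v\<bar> \<le> K" if "0 < v" "v < 1" for v
  proof -
    have RRd: "0 \<le> RR \<delta>" using RRnn[of \<delta>] d0 dh by simp
    consider "v \<le> \<delta>" | "\<delta> \<le> v" "v \<le> 2*\<delta>" | "2*\<delta> \<le> v" by linarith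
    then show ?thesis
    proof cases
      case 1
      then have "\<bar>G v\<bar> \<le> MW + RR \<delta>"
        using GQR[OF that(1) 1] QQ_bound[OF that] RRnn[OF that] RRle[OF that(1) 1] by linarith
      then show ?thesis unfolding K_def using K1nn by linarith
    next
      case 2
      then show ?thesis using K1[of v] MW_nonneg RRd unfolding K_def by auto
    next
      case 3
      then show ?thesis using GA[OF 3 that(2)] AAbd[OF 3 that(2)] K1nn RRd unfolding K_def by linarith
    qed
  qed
  have Gint: "set_integrable lborel {0<..<1} G"
    by (rule bounded_cont_integrable[where K=K])
       (use Gbd Gcont in \<open>auto intro!: continuous_at_imp_continuous_on\<close>)
  have gint: "set_integrable lborel {0<..<1} (\<lambda>v. calA v - 2 * ln 2 * \<chi>0 v * ln (1 / v))"
    using Gint by (subst set_integrable_cong[OF refl refl]) (auto simp: gG)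
  have I1: "set_integrable lborel {0<..<\<delta>} dQ"
    by (rule deriv_integrable_nonpos[where f=QQ and B=MW])
       (use d0 dh QQ_der dQ_cont dQ_nonpos QQ_bound in auto)
  have I2: "set_integrable lborel {0<..<\<delta>} dR"
  proof (rule deriv_integrable_nonneg[where f=RR and B="RR \<delta>"])
    fix x assume x: "0 < x" "x < \<delta>"
    then have x1: "x < 1" "x < 1/2" using dh by auto
    show "(RR has_real_derivative dR x) (at x)" by (rule RR_der[OF x(1) x1(1)])
    show "isCont dR x" by (rule dR_cont[OF x(1) x1(1)])
    show "0 \<le> dR x" by (rule dR_nonneg[OF x(1) x1(2)])
    show "\<bar>RR x\<bar> \<le> RR \<delta>" using RRnn[OF x(1) x1(1)] RRle[of x] x by simp
  qed (use d0 in simp)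
  have hI1: "set_integrable lborel {0<..<\<delta>} h"
  proof -
    have "set_integrable lborel {0<..<\<delta>} (\<lambda>v. dQ v + dR v)" using I1 I2 by (rule set_integral_add(1))
    moreover have "dQ v + dR v = h v" if "v \<in> {0<..<\<delta>}" for v
      using that dchi0[of v] c1[of v] unfolding h_def dA_def dR_def by (simp add: algebra_simps)
    ultimately show ?thesis by (subst set_integrable_cong[OF refl refl]) auto
  qed
  have hI2: "set_integrable lborel {\<delta>..2*\<delta>} h"
    by (rule borel_integrable_atLeastAtMost', rule continuous_at_imp_continuous_on)
       (use hcont d0 d1 in auto)
  have hI3: "set_integrable lborel {2*\<delta><..<1} h"
  proof -
    have "set_integrable lborel {2*\<delta><..<1} dA"
      by (rule deriv_integrable_nonpos[where f=AA and B="MW + \<bar>AA (2*\<delta>)\<bar>"])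
         (use d0 d1 AA_der dA_cont dA_nonpos AAbd in auto)
    moreover have "dA v = h v" if "v \<in> {2*\<delta><..<1}" for v
      using that dchi1[of v] c0[of v] unfolding h_def by simp
    ultimately show ?thesis by (subst set_integrable_cong[OF refl refl]) auto
  qed
  have "set_integrable lborel ({0<..<\<delta>} \<union> {\<delta>..2*\<delta>} \<union> {2*\<delta><..<1}) h"
    using hI1 hI2 hI3 by (intro set_integrable_Un) auto
  moreover have "{0<..<\<delta>} \<union> {\<delta>..2*\<delta>} \<union> {2*\<delta><..<1} = {0<..<(1::real)}"
    using d0 d1 by auto
  ultimately have hint: "set_integrable lborel {0<..<1} h" by simp
  show ?thesis by (rule W11_intro[OF gder gint hint])
qed


end
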